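(* In a finite dynamic game as described in the context, if $K^i$ is unilaterally sufficient information for player $i$, then for every Bayes–Nash equilibrium behavioral strategy profile $g=(g^j)_{j\in\mathcal{I}}$ there exists a $K^i$-based strategy $\rho^i$ such that $(\rho^i,g^{-i})$ is a Bayes–Nash equilibrium and $J^j(\rho^i,g^{-i})=J^j(g)$ for all $j\in\mathcal{I}$.
   Context: Game model: finite set of players $\mathcal{I}$, times $\mathcal{T}=\{1,\dots,T\}$. At time $t$ each player $i$ takes action $U_t^i\in\mathcal{U}_t^i$, obtains reward $R_t^i\in[-1,1]$ and learns new information $Z_t^i\in\mathcal{Z}_t^i$. There is a state $X_t\in\mathcal{X}_t$ with $(X_{t+1},Z_t,R_t)=f_t(X_t,U_t,W_t)$ for fixed functions $f_t$. Primitive random variables $(X_1,H_1)$ and $W_1,\dots,W_T$ are mutually independent with commonly known distributions. All sets are finite. Perfect recall: $H_t^i=(H_1^i,Z_{1:t-1}^i)\in\mathcal{H}_t^i$, and $U_t^i$ is a component of $Z_t^i$. Behavioral strategy $g_t^i:\mathcal{H}_t^i\to\Delta(\mathcal{U}_t^i)$; payoff $J^j(g)=\mathbb{E}^g[\sum_t R_t^j]$. A profile $g$ is a Bayes–Nash equilibrium if $J^j(g)\ge J^j(\tilde g^j,g^{-j})$ for all $j$ and all behavioral $\tilde g^j$. A realization is admissible under $g$ if it has positive probability under $g$. Compression: $K_1^i=\iota_1^i(H_1^i)$, $K_t^i=\iota_t^i(K_{t-1}^i,Z_{t-1}^i)$ for fixed maps, finite value sets $\mathcal{K}_t^i$; $k_t^i$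 is the compression of $h_t^i$; a $K^i$-based strategy has $\rho_t^i:\mathcal{K}_t^i\to\Delta(\mathcal{U}_t^i)$. Unilaterally sufficient information (USI): $K^i$ is USI for player $i$ if there exist $F_t^{i,g^i}:\mathcal{K}_t^i\to\Delta(\mathcal{H}_t^i)$ depending only on $g^i$ and $\Phi_t^{i,g^{-i}}:\mathcal{K}_t^i\to\Delta(\mathcal{X}_t\times\mathcal{H}_t^{-i})$ depending only on $g^{-i}$ with $\Pr^g(x_t,h_t\mid k_t^i)=F_t^{i,g^i}(h_t^i\mid k_t^i)\Phi_t^{i,g^{-i}}(x_t,h_t^{-i}\mid k_t^i)$ for all behavioral profiles $g$, all $t$, all $k_t^i$ admissible under $g$ (with $x_t,h_t^i,h_t^{-i}$ ranging independently; the left side is $0$ if they disagree on shared components). *)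

theory Defs
  imports "HOL-Probability.Probability"
begin

text \<open>Times are indexed 0-based: the paper's time t in {1..T}
  corresponds to index t-1 < T.  A history H_t^i = (H_1^i, Z_{1:t-1}^i) is represented
  as a pair (initial private information, list of observations so far).\<close>

type_synonym ('h,'z) hist = "'h \<times> 'z list"

record ('i,'x,'h,'u,'z,'w) game =
  horizon :: nat
  init    :: "('x \<times> ('i \<Rightarrow> 'h)) pmf"
  noise   :: "nat \<Rightarrow> 'w pmf"
  dyn     :: "nat \<Rightarrow> 'x \<Rightarrow> ('i \<Rightarrow> 'u) \<Rightarrow> 'w \<Rightarrow> 'x \<times> ('i \<Rightarrow> 'z) \<times> ('i \<Rightarrow> real)"
                                                   \<comment> \<open>f_t : (X_t,U_t,W_t) to (X_{t+1},Z_t,R_t)\<close>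
  acts    :: "nat \<Rightarrow> 'i \<Rightarrow> 'u set"
  act_of  :: "nat \<Rightarrow> 'i \<Rightarrow> 'z \<Rightarrow> 'u"              \<comment> \<open>U_t^i is a component of Z_t^i\<close>

definition valid_game :: "('i,'x,'h,'u,'z,'w) game \<Rightarrow> bool" where
  "valid_game G \<longleftrightarrow>
     (\<forall>t x u w i. t < horizon G \<longrightarrow> (\<forall>j. u j \<in> acts G t j) \<longrightarrow>
        \<bar>snd (snd (dyn G t x u w)) i\<bar> \<le> 1 \<and>
        act_of G t i (fst (snd (dyn G t x u w)) i) = u i)"

type_synonym ('i,'h,'u,'z) profile = "'i \<Rightarrow> nat \<Rightarrow> ('h,'z) hist \<Rightarrow> 'u pmf"

definition joint_act :: "('i::finite \<Rightarrow> 'u pmf) \<Rightarrow> ('i \<Rightarrow> 'u) pmf" where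
  "joint_act p = Pi_pmf UNIV undefined p"

primrec run :: "('i::finite,'x,'h,'u,'z,'w) game \<Rightarrow> ('i,'h,'u,'z) profile \<Rightarrow> nat
      \<Rightarrow> ('x \<times> ('i \<Rightarrow> ('h,'z) hist) \<times> ('i \<Rightarrow> real)) pmf" where
  "run G g 0 = map_pmf (\<lambda>(x, h1). (x, \<lambda>i. (h1 i, []), \<lambda>i. 0)) (init G)"
| "run G g (Suc t) = bind_pmf (run G g t) (\<lambda>(x, H, c).
      bind_pmf (joint_act (\<lambda>i. g i t (H i))) (\<lambda>u.
      bind_pmf (noise G t) (\<lambda>w.
        (case dyn G t x u w of (x', z, r) \<Rightarrow>
           return_pmf (x', \<lambda>i. (fst (H i), snd (H i) @ [z i]), \<lambda>i. c i + r i)))))"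

definition behavioral :: "('i,'x,'h,'u,'z,'w) game \<Rightarrow> ('i,'h,'u,'z) profile \<Rightarrow> bool" where
  "behavioral G g \<longleftrightarrow> (\<forall>i t h. t < horizon G \<longrightarrow> set_pmf (g i t h) \<subseteq> acts G t i)"

definition payoff :: "('i::finite,'x,'h,'u,'z,'w) game \<Rightarrow> ('i,'h,'u,'z) profile \<Rightarrow> 'i \<Rightarrow> real" where
  "payoff G g j = measure_pmf.expectation (run G g (horizon G)) (\<lambda>(x, H, c). c j)"

definition BNE :: "('i::finite,'x,'h,'u,'z,'w) game \<Rightarrow> ('i,'h,'u,'z) profile \<Rightarrow> bool" where
  "BNE G g \<longleftrightarrow> behavioral G g \<and>
     (\<forall>j g'. behavioral G (g(j := g')) \<longrightarrow> payoff G (g(j := g')) j \<le> payoff G g j)"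

primrec kc :: "('i \<Rightarrow> 'h \<Rightarrow> 'k) \<Rightarrow> (nat \<Rightarrow> 'i \<Rightarrow> 'k \<Rightarrow> 'z \<Rightarrow> 'k) \<Rightarrow> 'i \<Rightarrow> 'h \<Rightarrow> 'z list \<Rightarrow> nat \<Rightarrow> 'k" where
  "kc \<iota>0 \<iota> i h1 zs 0 = \<iota>0 i h1"
| "kc \<iota>0 \<iota> i h1 zs (Suc n) = \<iota> n i (kc \<iota>0 \<iota> i h1 zs n) (zs ! n)"

definition compress :: "('i \<Rightarrow> 'h \<Rightarrow> 'k) \<Rightarrow> (nat \<Rightarrow> 'i \<Rightarrow> 'k \<Rightarrow> 'z \<Rightarrow> 'k) \<Rightarrow> 'i \<Rightarrow> ('h,'z) hist \<Rightarrow> 'k" where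
  "compress \<iota>0 \<iota> i h = kc \<iota>0 \<iota> i (fst h) (snd h) (length (snd h))"

definition K_based :: "('i,'x,'h,'u,'z,'w) game \<Rightarrow> 'i \<Rightarrow> (nat \<Rightarrow> 'k \<Rightarrow> 'u pmf) \<Rightarrow> bool" where
  "K_based G i \<rho> \<longleftrightarrow> (\<forall>t k. t < horizon G \<longrightarrow> set_pmf (\<rho> t k) \<subseteq> acts G t i)"

definition kstrat :: "('i \<Rightarrow> 'h \<Rightarrow> 'k) \<Rightarrow> (nat \<Rightarrow> 'i \<Rightarrow> 'k \<Rightarrow> 'z \<Rightarrow> 'k) \<Rightarrow> 'i
     \<Rightarrow> (nat \<Rightarrow> 'k \<Rightarrow> 'u pmf) \<Rightarrow> nat \<Rightarrow> ('h,'z) hist \<Rightarrow> 'u pmf" where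
  "kstrat \<iota>0 \<iota> i \<rho> = (\<lambda>t h. \<rho> t (compress \<iota>0 \<iota> i h))"

definition prob_K :: "('i::finite,'x,'h,'u,'z,'w) game \<Rightarrow> ('i,'h,'u,'z) profile
     \<Rightarrow> ('i \<Rightarrow> 'h \<Rightarrow> 'k) \<Rightarrow> (nat \<Rightarrow> 'i \<Rightarrow> 'k \<Rightarrow> 'z \<Rightarrow> 'k) \<Rightarrow> 'i \<Rightarrow> nat \<Rightarrow> 'k \<Rightarrow> real" where
  "prob_K G g \<iota>0 \<iota> i t k =
     measure_pmf.prob (run G g t) {(x, H, c). compress \<iota>0 \<iota> i (H i) = k}"

definition cond_XH :: "('i::finite,'x,'h,'u,'z,'w) game \<Rightarrow> ('i,'h,'u,'z) profile
     \<Rightarrow> ('i \<Rightarrow> 'h \<Rightarrow> 'k) \<Rightarrow> (nat \<Rightarrow> 'i \<Rightarrow> 'k \<Rightarrow> 'z \<Rightarrow> 'k) \<Rightarrow> 'i \<Rightarrow> nat \<Rightarrow> 'k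
     \<Rightarrow> 'x \<Rightarrow> ('i \<Rightarrow> ('h,'z) hist) \<Rightarrow> real" where
  "cond_XH G g \<iota>0 \<iota> i t k x H =
     measure_pmf.prob (run G g t) {(x', H', c). x' = x \<and> H' = H \<and> compress \<iota>0 \<iota> i (H i) = k}
       / prob_K G g \<iota>0 \<iota> i t k"

text \<open>F depends only on g^i (it receives g i);
  Phi depends only on g^{-i} (it receives the profile with the i-th component erased).
  Phi is a distribution on X_t x H_t^{-i}, represented as a pmf on 'x x ('i => hist)
  of which only the marginal on (x, h^{-i}) is used.\<close>
definition USI :: "('i::finite,'x,'h,'u,'z,'w) game
     \<Rightarrow> ('i \<Rightarrow> 'h \<Rightarrow> 'k) \<Rightarrow> (nat \<Rightarrow> 'i \<Rightarrow> 'k \<Rightarrow> 'z \<Rightarrow> 'k) \<Rightarrow> 'i \<Rightarrow> bool" where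
  "USI G \<iota>0 \<iota> i \<longleftrightarrow>
    (\<exists>(F :: (nat \<Rightarrow> ('h,'z) hist \<Rightarrow> 'u pmf) \<Rightarrow> nat \<Rightarrow> 'k \<Rightarrow> ('h,'z) hist pmf)
      (\<Phi> :: ('i,'h,'u,'z) profile \<Rightarrow> nat \<Rightarrow> 'k \<Rightarrow> ('x \<times> ('i \<Rightarrow> ('h,'z) hist)) pmf).
      \<forall>g. behavioral G g \<longrightarrow>
        (\<forall>t k. t < horizon G \<longrightarrow> prob_K G g \<iota>0 \<iota> i t k > 0 \<longrightarrow>
          (\<forall>x H. cond_XH G g \<iota>0 \<iota> i t k x H =
             pmf (F (g i) t k) (H i) *
             measure_pmf.prob (\<Phi> (g(i := undefined)) t k)
               {(x', H'). x' = x \<and> (\<forall>j. j \<noteq> i \<longrightarrow> H' j = H j)})))"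

end

theory Submission
  imports Defs
begin

lemma kc_append: "n \<le> length zs \<Longrightarrow> kc \<iota>0 \<iota> i h (zs @ ys) n = kc \<iota>0 \<iota> i h zs n"
  by (induction n) (auto simp: nth_append)

lemma compress_snoc: "compress \<iota>0 \<iota> i (a, zs @ [z]) = \<iota> (length zs) i (compress \<iota>0 \<iota> i (a, zs)) z"
  by (simp add: compress_def kc_append)

lemma run_len: "s \<in> set_pmf (run G g t) \<Longrightarrow> length (snd (fst (snd s) j)) = t"
proof (induction t arbitrary: s)
  case 0 then show ?case by auto
next
  case (Suc t) then show ?case by (auto simp: split_beta)
qed

lemma finite_run:
  fixes G :: "('i::finite, 'x::finite, 'h::finite, 'u::finite, 'z::finite, 'w::finite) game"
  shows "finite (set_pmf (run G g t))"
proof (induction t)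
  case 0 then show ?case by auto
next
  case (Suc t)
  show ?case using Suc by (auto simp: split_beta intro!: finite_UN_I)
qed

lemma exp_bind:
  fixes f :: "_ \<Rightarrow> real"
  assumes fM: "finite (set_pmf M)" and fN: "\<And>x. x \<in> set_pmf M \<Longrightarrow> finite (set_pmf (N x))"
  shows "measure_pmf.expectation (bind_pmf M N) f = measure_pmf.expectation M (\<lambda>x. measure_pmf.expectation (N x) f)"
proof -
  define S where "S = (\<Union>x\<in>set_pmf M. set_pmf (N x))"
  have fS: "finite S" unfolding S_def using fM fN by auto
  have "measure_pmf.expectation (bind_pmf M N) f = (\<Sum>y\<in>S. pmf (bind_pmf M N) y * f y)"
    by (subst integral_measure_pmf[OF fS]) (auto simp: S_def)
  also have "\<dots> = (\<Sum>y\<in>S. (\<Sum>x\<in>set_pmf M. pmf M x * pmf (N x) y) * f y)"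
    by (intro sum.cong refl, subst pmf_bind, subst integral_measure_pmf[OF fM]) (auto simp: mult.commute)
  also have "\<dots> = (\<Sum>x\<in>set_pmf M. pmf M x * (\<Sum>y\<in>S. pmf (N x) y * f y))"
    by (simp add: sum_distrib_left sum_distrib_right sum.swap[of _ S] mult.assoc)
  also have "\<dots> = measure_pmf.expectation M (\<lambda>x. measure_pmf.expectation (N x) f)"
    apply (subst integral_measure_pmf[OF fM], simp)
    apply (intro sum.cong refl)
    apply (subst integral_measure_pmf[OF fS])
    apply (auto simp: S_def)
    done
  finally show ?thesis .
qed

definition piK :: "('i \<Rightarrow> 'h \<Rightarrow> 'k) \<Rightarrow> (nat \<Rightarrow> 'i \<Rightarrow> 'k \<Rightarrow> 'z \<Rightarrow> 'k) \<Rightarrow> 'i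
   \<Rightarrow> 'x \<times> ('i \<Rightarrow> ('h,'z) hist) \<times> ('i \<Rightarrow> real) \<Rightarrow> 'x \<times> ('i \<Rightarrow> ('h,'z) hist) \<times> 'k" where
  "piK \<iota>0 \<iota> i s = (fst s, (fst (snd s))(i := undefined), compress \<iota>0 \<iota> i (fst (snd s) i))"

definition ilaw where
  "ilaw G g \<iota>0 \<iota> i t = bind_pmf (run G g t) (\<lambda>s. map_pmf (\<lambda>y. (piK \<iota>0 \<iota> i s, y)) (g i t (fst (snd s) i)))"

definition actlaw where
  "actlaw G g \<iota>0 \<iota> i t = bind_pmf (run G g t)
     (\<lambda>s. map_pmf (\<lambda>u. (piK \<iota>0 \<iota> i s, u)) (joint_act (\<lambda>j. g j t (fst (snd s) j))))"

definition others where
  "others g i t Hm = Pi_pmf (UNIV - {i}) undefined (\<lambda>j. g j t (Hm j))"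

definition nextf where
  "nextf G \<iota> i t a u w = (case dyn G t (fst a) u w of (x', z, r) \<Rightarrow>
      (x', (\<lambda>j. (fst (fst (snd a) j), snd (fst (snd a) j) @ [z j]))(i := undefined), \<iota> t i (snd (snd a)) (z i)))"

lemma joint_act_split:
  fixes p :: "'i::finite \<Rightarrow> 'u pmf"
  shows "joint_act p = bind_pmf (p i) (\<lambda>y. map_pmf (\<lambda>f. f(i:=y)) (Pi_pmf (UNIV - {i}) undefined p))"
proof -
  have "(UNIV :: 'i set) = insert i (UNIV - {i})" by auto
  then have "joint_act p = Pi_pmf (insert i (UNIV - {i})) undefined p" unfolding joint_act_def by simp
  also have "\<dots> = bind_pmf (p i) (\<lambda>y. map_pmf (\<lambda>f. f(i:=y)) (Pi_pmf (UNIV - {i}) undefined p))"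
    by (subst Pi_pmf_insert') (auto simp: map_pmf_def)
  finally show ?thesis .
qed

lemma actlaw_eq:
  fixes G :: "('i::finite, 'x::finite, 'h::finite, 'u::finite, 'z::finite, 'w::finite) game"
  shows "actlaw G g \<iota>0 \<iota> i t = bind_pmf (ilaw G g \<iota>0 \<iota> i t)
     (\<lambda>(a,y). map_pmf (\<lambda>f. (a, f(i:=y))) (others g i t (fst (snd a))))"
proof -
  have o: "others g i t ((fst (snd s))(i := undefined)) = Pi_pmf (UNIV - {i}) undefined (\<lambda>j. g j t (fst (snd s) j))"
    for s :: "'x \<times> ('i \<Rightarrow> ('h,'z) hist) \<times> ('i \<Rightarrow> real)"
    unfolding others_def by (rule Pi_pmf_cong) auto
  show ?thesis
    unfolding actlaw_def ilaw_def
    apply (subst joint_act_split[where i=i])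
    apply (simp add: bind_assoc_pmf map_bind_pmf bind_map_pmf map_pmf_comp piK_def o)
    done
qed

lemma pi_next:
  fixes G :: "('i::finite, 'x::finite, 'h::finite, 'u::finite, 'z::finite, 'w::finite) game"
  shows "map_pmf (piK \<iota>0 \<iota> i) (run G g (Suc t)) =
    bind_pmf (actlaw G g \<iota>0 \<iota> i t) (\<lambda>(a,u). map_pmf (\<lambda>w. nextf G \<iota> i t a u w) (noise G t))"
proof -
  have "map_pmf (piK \<iota>0 \<iota> i) (run G g (Suc t)) = bind_pmf (run G g t) (\<lambda>s.
      bind_pmf (joint_act (\<lambda>j. g j t (fst (snd s) j))) (\<lambda>u.
        map_pmf (\<lambda>w. nextf G \<iota> i t (piK \<iota>0 \<iota> i s) u w) (noise G t)))"
    apply (simp add: map_bind_pmf split_beta)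
    apply (intro bind_pmf_cong refl)
    apply (simp add: map_pmf_def)
    apply (intro bind_pmf_cong refl)
    apply (auto simp: nextf_def piK_def split_beta compress_snoc run_len)
    done
  also have "\<dots> = bind_pmf (actlaw G g \<iota>0 \<iota> i t) (\<lambda>(a,u). map_pmf (\<lambda>w. nextf G \<iota> i t a u w) (noise G t))"
    by (simp add: actlaw_def bind_assoc_pmf bind_map_pmf)
  finally show ?thesis .
qed

lemma exp_add_fin:
  fixes f h :: "_ \<Rightarrow> real"
  assumes "finite (set_pmf M)"
  shows "measure_pmf.expectation M (\<lambda>x. f x + h x) = measure_pmf.expectation M f + measure_pmf.expectation M h"
  using assms by (intro Bochner_Integration.integral_add integrable_measure_pmf_finite)

lemma exp_const_add:
  fixes f :: "_ \<Rightarrow> real"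
  assumes "finite (set_pmf M)"
  shows "measure_pmf.expectation M (\<lambda>x. c + f x) = c + measure_pmf.expectation M f"
  using exp_add_fin[OF assms, of "\<lambda>_. c" f] by simp

lemma run_Suc':
  "run G g (Suc t) = bind_pmf (run G g t) (\<lambda>s.
      bind_pmf (joint_act (\<lambda>j. g j t (fst (snd s) j))) (\<lambda>u.
      bind_pmf (noise G t) (\<lambda>w.
         return_pmf (fst (dyn G t (fst s) u w),
            \<lambda>j. (fst (fst (snd s) j), snd (fst (snd s) j) @ [fst (snd (dyn G t (fst s) u w)) j]),
            \<lambda>j. snd (snd s) j + snd (snd (dyn G t (fst s) u w)) j))))"
  by (simp add: case_prod_unfold)

definition rewf where
  "rewf G t j au = measure_pmf.expectation (noise G t) (\<lambda>w. snd (snd (dyn G t (fst (fst au)) (snd au) w)) j)"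

lemma rew_step:
  fixes G :: "('i::finite, 'x::finite, 'h::finite, 'u::finite, 'z::finite, 'w::finite) game"
  shows "measure_pmf.expectation (run G g (Suc t)) (\<lambda>s. snd (snd s) j) =
     measure_pmf.expectation (run G g t) (\<lambda>s. snd (snd s) j) +
     measure_pmf.expectation (actlaw G g \<iota>0 \<iota> i t) (rewf G t j)"
proof -
  let ?L = "run G g t"
  let ?J = "\<lambda>s. joint_act (\<lambda>j. g j t (fst (snd s) j))"
  let ?r = "\<lambda>s u w. snd (snd (dyn G t (fst s) u w)) j"
  have "measure_pmf.expectation (run G g (Suc t)) (\<lambda>s. snd (snd s) j) =
     measure_pmf.expectation ?L (\<lambda>s. measure_pmf.expectation (?J s) (\<lambda>u.
        measure_pmf.expectation (noise G t) (\<lambda>w. snd (snd s) j + ?r s u w)))"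
    apply (subst run_Suc')
    apply (subst exp_bind)
      apply (simp add: finite_run)
     apply (simp add: finite_run)
    apply (intro Bochner_Integration.integral_cong refl)
    apply (subst exp_bind)
      apply simp
     apply simp
    apply (intro Bochner_Integration.integral_cong refl)
    apply (subst exp_bind)
      apply simp
     apply simp
    apply simp
    done
  also have "\<dots> = measure_pmf.expectation ?L (\<lambda>s. snd (snd s) j + measure_pmf.expectation (?J s) (\<lambda>u.
        measure_pmf.expectation (noise G t) (\<lambda>w. ?r s u w)))"
    by (simp add: exp_const_add)
  also have "\<dots> = measure_pmf.expectation ?L (\<lambda>s. snd (snd s) j) + measure_pmf.expectation ?L (\<lambda>s. measure_pmf.expectation (?J s) (\<lambda>u.
        measure_pmf.expectation (noise G t) (\<lambda>w. ?r s u w)))"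
    by (simp add: exp_add_fin finite_run)
  also have "measure_pmf.expectation ?L (\<lambda>s. measure_pmf.expectation (?J s) (\<lambda>u.
        measure_pmf.expectation (noise G t) (\<lambda>w. ?r s u w))) = measure_pmf.expectation (actlaw G g \<iota>0 \<iota> i t) (rewf G t j)"
    unfolding actlaw_def
    by (subst exp_bind) (simp_all add: finite_run rewf_def piK_def)
  finally show ?thesis .
qed

lemma payoff_sum:
  fixes G :: "('i::finite, 'x::finite, 'h::finite, 'u::finite, 'z::finite, 'w::finite) game"
  shows "measure_pmf.expectation (run G g n) (\<lambda>s. snd (snd s) j) =
     (\<Sum>t<n. measure_pmf.expectation (actlaw G g \<iota>0 \<iota> i t) (rewf G t j))"
proof (induction n)
  case 0 then show ?case by (simp add: split_beta)
next
  case (Suc n) then show ?case using rew_step[of G g n j \<iota>0 \<iota> i] by (simp del: run.simps)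
qed

lemma measure_cond_pmf':
  assumes "set_pmf p \<inter> s \<noteq> {}"
  shows "measure_pmf.prob (cond_pmf p s) A = measure_pmf.prob p (s \<inter> A) / measure_pmf.prob p s"
  using assms
  apply (simp add: cond_pmf.rep_eq)
  apply (subst measure_uniform_measure)
    apply (simp add: emeasure_measure_pmf_not_zero)
   apply (simp add: measure_pmf.emeasure_finite)
  apply simp
  apply simp
  done

lemma bind_pair_pmf: "bind_pmf (pair_pmf A B) f = bind_pmf A (\<lambda>a. bind_pmf B (\<lambda>b. f (a, b)))"
  by (simp add: pair_pmf_def bind_assoc_pmf bind_return_pmf)

lemma core:
  fixes G :: "('i::finite, 'x::finite, 'h::finite, 'u::finite, 'z::finite, 'w::finite) game"
    and \<iota>0 :: "'i \<Rightarrow> 'h \<Rightarrow> 'k::finite"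
    and \<iota> :: "nat \<Rightarrow> 'i \<Rightarrow> 'k \<Rightarrow> 'z \<Rightarrow> 'k"
    and g :: "('i,'h,'u,'z) profile"
    and F :: "nat \<Rightarrow> 'k \<Rightarrow> ('h,'z) hist pmf"
    and \<Phi> :: "nat \<Rightarrow> 'k \<Rightarrow> ('x \<times> ('i \<Rightarrow> ('h,'z) hist)) pmf"
  assumes usi: "\<And>k x H. prob_K G g \<iota>0 \<iota> i t k > 0 \<Longrightarrow>
     cond_XH G g \<iota>0 \<iota> i t k x H = pmf (F t k) (H i) *
       measure_pmf.prob (\<Phi> t k) {(x', H'). x' = x \<and> (\<forall>j. j \<noteq> i \<longrightarrow> H' j = H j)}"
  shows "ilaw G g \<iota>0 \<iota> i t = bind_pmf (map_pmf (piK \<iota>0 \<iota> i) (run G g t))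
            (\<lambda>a. map_pmf (\<lambda>y. (a, y)) (bind_pmf (F t (snd (snd a))) (g i t)))"
proof -
  define L where "L = run G g t"
  define K where "K = (\<lambda>s::'x \<times> ('i \<Rightarrow> ('h,'z) hist) \<times> ('i \<Rightarrow> real). compress \<iota>0 \<iota> i (fst (snd s) i))"
  define C where "C = (\<lambda>k. cond_pmf L {s. K s = k})"
  define XH where "XH = (\<lambda>s::'x \<times> ('i \<Rightarrow> ('h,'z) hist) \<times> ('i \<Rightarrow> real). (fst s, fst (snd s)))"
  define \<rho> where "\<rho> = (\<lambda>k. bind_pmf (F t k) (g i t))"
  have Ldec: "L = bind_pmf (map_pmf K L) C"
    unfolding C_def
    by (rule bind_cond_pmf_cancel[symmetric]) (auto simp: vimage_def)
  have pK: "prob_K G g \<iota>0 \<iota> i t k > 0" if "k \<in> set_pmf (map_pmf K L)" for k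
  proof -
    from that obtain s where s: "s \<in> set_pmf L" "K s = k" by auto
    have "{(x, H, c). compress \<iota>0 \<iota> i (H i) = k} = {s. K s = k}" by (auto simp: K_def)
    then show ?thesis unfolding prob_K_def L_def[symmetric]
      using measure_pmf_posI[OF s(1), of "{s. K s = k}"] s(2) by simp
  qed
  have ne: "set_pmf L \<inter> {s. K s = k} \<noteq> {}" if "k \<in> set_pmf (map_pmf K L)" for k
    using that by auto
  have Fsupp: "compress \<iota>0 \<iota> i h = k" if k: "k \<in> set_pmf (map_pmf K L)" and h: "h \<in> set_pmf (F t k)" for k h
  proof (rule ccontr)
    assume nk: "compress \<iota>0 \<iota> i h \<noteq> k"
    obtain p0 where p0: "p0 \<in> set_pmf (\<Phi> t k)" using set_pmf_not_empty[of "\<Phi> t k"] by blast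
    obtain x0 H0 where p0e: "p0 = (x0, H0)" by (cases p0)
    define H where "H = H0(i := h)"
    have "cond_XH G g \<iota>0 \<iota> i t k x0 H = 0"
      unfolding cond_XH_def using nk by (simp add: H_def case_prod_unfold)
    moreover have "pmf (F t k) (H i) > 0" using h by (simp add: H_def pmf_positive)
    moreover have "measure_pmf.prob (\<Phi> t k) {(x', H'). x' = x0 \<and> (\<forall>j. j \<noteq> i \<longrightarrow> H' j = H j)} > 0"
      by (rule measure_pmf_posI[OF p0]) (simp add: p0e H_def)
    ultimately show False using usi[OF pK[OF k], of x0 H] by simp
  qed
  have lemA: "map_pmf XH (C k) = map_pmf (\<lambda>((x,H'),h). (x, H'(i:=h))) (pair_pmf (\<Phi> t k) (F t k))"
    if k: "k \<in> set_pmf (map_pmf K L)" for k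
  proof (rule pmf_eqI)
    fix xh :: "'x \<times> ('i \<Rightarrow> ('h,'z) hist)"
    obtain x H where xh: "xh = (x, H)" by (cases xh)
    define E where "E = {(x', H'). x' = x \<and> (\<forall>j. j \<noteq> i \<longrightarrow> H' j = (H j :: ('h,'z) hist))}"
    have "pmf (map_pmf XH (C k)) xh = measure_pmf.prob L ({s. K s = k} \<inter> XH -` {xh}) / measure_pmf.prob L {s. K s = k}"
      unfolding pmf_map C_def by (rule measure_cond_pmf'[OF ne[OF k]])
    also have "\<dots> = cond_XH G g \<iota>0 \<iota> i t k x H"
    proof -
      have 1: "{s. K s = k} \<inter> XH -` {xh} = {(x', H', c). x' = x \<and> H' = H \<and> compress \<iota>0 \<iota> i (H i) = k}"
        by (auto simp: K_def XH_def xh)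
      have 2: "{(x, H, c). compress \<iota>0 \<iota> i (H i) = k} = {s. K s = k}" by (auto simp: K_def)
      show ?thesis unfolding cond_XH_def prob_K_def 1 2 L_def ..
    qed
    also have "\<dots> = pmf (F t k) (H i) * measure_pmf.prob (\<Phi> t k) E"
      unfolding E_def by (rule usi[OF pK[OF k]])
    also have "\<dots> = measure_pmf.prob (pair_pmf (\<Phi> t k) (F t k)) (E \<times> {H i})"
      by (subst measure_pmf_prob_product) (auto simp: measure_pmf_single)
    also have "E \<times> {H i} = (\<lambda>((x,H'),h). (x, H'(i:=h))) -` {xh}"
      by (auto simp: E_def xh fun_eq_iff)
    finally show "pmf (map_pmf XH (C k)) xh = pmf (map_pmf (\<lambda>((x,H'),h). (x, H'(i:=h))) (pair_pmf (\<Phi> t k) (F t k))) xh"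
      by (simp add: pmf_map)
  qed
  have bindC: "bind_pmf (C k) (\<lambda>s. Q (XH s)) = bind_pmf (\<Phi> t k) (\<lambda>(x,H'). bind_pmf (F t k) (\<lambda>h. Q (x, H'(i:=h))))"
    if k: "k \<in> set_pmf (map_pmf K L)" for k and Q :: "'x \<times> ('i \<Rightarrow> ('h,'z) hist) \<Rightarrow> (('x \<times> ('i \<Rightarrow> ('h,'z) hist) \<times> 'k) \<times> 'u) pmf"
  proof -
    have "bind_pmf (C k) (\<lambda>s. Q (XH s)) = bind_pmf (map_pmf XH (C k)) Q" by (simp add: bind_map_pmf)
    also have "\<dots> = bind_pmf (\<Phi> t k) (\<lambda>(x,H'). bind_pmf (F t k) (\<lambda>h. Q (x, H'(i:=h))))"
      unfolding lemA[OF k] by (simp add: bind_map_pmf bind_pair_pmf split_beta case_prod_unfold)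
    finally show ?thesis .
  qed
  have perk: "bind_pmf (C k) (\<lambda>s. map_pmf (\<lambda>y. (piK \<iota>0 \<iota> i s, y)) (g i t (fst (snd s) i))) =
      bind_pmf (C k) (\<lambda>s. map_pmf (\<lambda>y. (piK \<iota>0 \<iota> i s, y)) (\<rho> (K s)))"
    if k: "k \<in> set_pmf (map_pmf K L)" for k
  proof -
    have e1: "(\<lambda>s. map_pmf (\<lambda>y. (piK \<iota>0 \<iota> i s, y)) (g i t (fst (snd s) i))) =
       (\<lambda>s. (\<lambda>(x,H). map_pmf (\<lambda>y. ((x, H(i:=undefined), compress \<iota>0 \<iota> i (H i)), y)) (g i t (H i))) (XH s))"
      by (auto simp: piK_def XH_def)
    have e2: "(\<lambda>s. map_pmf (\<lambda>y. (piK \<iota>0 \<iota> i s, y)) (\<rho> (K s))) =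
       (\<lambda>s. (\<lambda>(x,H). map_pmf (\<lambda>y. ((x, H(i:=undefined), compress \<iota>0 \<iota> i (H i)), y)) (\<rho> (compress \<iota>0 \<iota> i (H i)))) (XH s))"
      by (auto simp: piK_def XH_def K_def)
    show ?thesis
      unfolding e1 e2 bindC[OF k]
    proof (intro bind_pmf_cong refl, clarsimp)
      fix x H'
      have "bind_pmf (F t k) (\<lambda>h. map_pmf (\<lambda>y. ((x, H'(i := undefined), compress \<iota>0 \<iota> i h), y)) (g i t h))
          = bind_pmf (F t k) (\<lambda>h. map_pmf (\<lambda>y. ((x, H'(i := undefined), k), y)) (g i t h))"
        by (intro bind_pmf_cong refl) (simp add: Fsupp[OF k])
      also have "\<dots> = map_pmf (\<lambda>y. ((x, H'(i := undefined), k), y)) (\<rho> k)"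
        by (simp add: \<rho>_def map_bind_pmf)
      also have "\<dots> = bind_pmf (F t k) (\<lambda>h. map_pmf (\<lambda>y. ((x, H'(i := undefined), compress \<iota>0 \<iota> i h), y)) (\<rho> (compress \<iota>0 \<iota> i h)))"
        by (subst bind_pmf_cong[OF refl, where g="\<lambda>h. map_pmf (\<lambda>y. ((x, H'(i := undefined), k), y)) (\<rho> k)"])
           (simp_all add: Fsupp[OF k])
      finally show "bind_pmf (F t k) (\<lambda>h. map_pmf (\<lambda>y. ((x, H'(i := undefined), compress \<iota>0 \<iota> i h), y)) (g i t h))
          = bind_pmf (F t k) (\<lambda>h. map_pmf (\<lambda>y. ((x, H'(i := undefined), compress \<iota>0 \<iota> i h), y)) (\<rho> (compress \<iota>0 \<iota> i h)))" .
    qed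
  qed
  have "ilaw G g \<iota>0 \<iota> i t = bind_pmf L (\<lambda>s. map_pmf (\<lambda>y. (piK \<iota>0 \<iota> i s, y)) (g i t (fst (snd s) i)))"
    by (simp add: ilaw_def L_def)
  also have "\<dots> = bind_pmf (map_pmf K L) (\<lambda>k. bind_pmf (C k) (\<lambda>s. map_pmf (\<lambda>y. (piK \<iota>0 \<iota> i s, y)) (g i t (fst (snd s) i))))"
    by (subst Ldec) (simp add: bind_assoc_pmf)
  also have "\<dots> = bind_pmf (map_pmf K L) (\<lambda>k. bind_pmf (C k) (\<lambda>s. map_pmf (\<lambda>y. (piK \<iota>0 \<iota> i s, y)) (\<rho> (K s))))"
    by (intro bind_pmf_cong refl perk)
  also have "\<dots> = bind_pmf L (\<lambda>s. map_pmf (\<lambda>y. (piK \<iota>0 \<iota> i s, y)) (\<rho> (K s)))"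
    by (subst (2) Ldec) (simp add: bind_assoc_pmf)
  also have "\<dots> = bind_pmf (map_pmf (piK \<iota>0 \<iota> i) (run G g t))
            (\<lambda>a. map_pmf (\<lambda>y. (a, y)) (bind_pmf (F t (snd (snd a))) (g i t)))"
    by (simp add: bind_map_pmf L_def \<rho>_def piK_def K_def)
  finally show ?thesis .
qed

lemma replace_payoff:
  fixes G :: "('i::finite, 'x::finite, 'h::finite, 'u::finite, 'z::finite, 'w::finite) game"
    and \<iota>0 :: "'i \<Rightarrow> 'h \<Rightarrow> 'k::finite"
    and \<iota> :: "nat \<Rightarrow> 'i \<Rightarrow> 'k \<Rightarrow> 'z \<Rightarrow> 'k"
    and g0 :: "('i,'h,'u,'z) profile"
    and F :: "nat \<Rightarrow> 'k \<Rightarrow> ('h,'z) hist pmf"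
    and \<Phi> :: "nat \<Rightarrow> 'k \<Rightarrow> ('x \<times> ('i \<Rightarrow> ('h,'z) hist)) pmf"
  assumes usi: "\<And>t k x H. t < horizon G \<Longrightarrow> prob_K G g0 \<iota>0 \<iota> i t k > 0 \<Longrightarrow>
     cond_XH G g0 \<iota>0 \<iota> i t k x H = pmf (F t k) (H i) *
       measure_pmf.prob (\<Phi> t k) {(x', H'). x' = x \<and> (\<forall>j. j \<noteq> i \<longrightarrow> H' j = H j)}"
    and rho: "\<And>t k. \<rho> t k = bind_pmf (F t k) (g0 i t)"
  shows "payoff G (g0(i := kstrat \<iota>0 \<iota> i \<rho>)) j = payoff G g0 j"
proof -
  define g1 where "g1 = g0(i := kstrat \<iota>0 \<iota> i \<rho>)"
  have ilaw0: "ilaw G g0 \<iota>0 \<iota> i t = bind_pmf (map_pmf (piK \<iota>0 \<iota> i) (run G g0 t))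
            (\<lambda>a. map_pmf (\<lambda>y. (a, y)) (\<rho> t (snd (snd a))))" if "t < horizon G" for t
    unfolding rho by (rule core) (rule usi[OF that])
  have ilaw1: "ilaw G g1 \<iota>0 \<iota> i t = bind_pmf (map_pmf (piK \<iota>0 \<iota> i) (run G g1 t))
            (\<lambda>a. map_pmf (\<lambda>y. (a, y)) (\<rho> t (snd (snd a))))" for t
    by (simp add: ilaw_def bind_map_pmf g1_def kstrat_def piK_def)
  have oth: "others g1 i t Hm = others g0 i t Hm" for t Hm
    unfolding others_def g1_def by (rule Pi_pmf_cong) auto
  have eqpi: "t \<le> horizon G \<Longrightarrow> map_pmf (piK \<iota>0 \<iota> i) (run G g1 t) = map_pmf (piK \<iota>0 \<iota> i) (run G g0 t)" for t
  proof (induction t)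
    case 0 then show ?case by simp
  next
    case (Suc t)
    then have lt: "t < horizon G" by simp
    have "actlaw G g1 \<iota>0 \<iota> i t = actlaw G g0 \<iota>0 \<iota> i t"
      using Suc lt by (simp add: actlaw_eq ilaw0 ilaw1 oth)
    then show ?case by (simp only: pi_next)
  qed
  have eqact: "actlaw G g1 \<iota>0 \<iota> i t = actlaw G g0 \<iota>0 \<iota> i t" if "t < horizon G" for t
    using eqpi[of t] that by (simp add: actlaw_eq ilaw0 ilaw1 oth)
  have pay: "payoff G g j = (\<Sum>t<horizon G. measure_pmf.expectation (actlaw G g \<iota>0 \<iota> i t) (rewf G t j))" for g
    unfolding payoff_def by (simp add: case_prod_unfold payoff_sum[of G g "horizon G" j \<iota>0 \<iota> i, symmetric])
  show ?thesis
    unfolding g1_def[symmetric] pay using eqact by (intro sum.cong) auto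
qed

theorem lemma6:
  fixes G :: "('i::finite, 'x::finite, 'h::finite, 'u::finite, 'z::finite, 'w::finite) game"
    and \<iota>0 :: "'i \<Rightarrow> 'h \<Rightarrow> 'k::finite"
    and \<iota> :: "nat \<Rightarrow> 'i \<Rightarrow> 'k \<Rightarrow> 'z \<Rightarrow> 'k"
    and i :: 'i
    and g :: "('i,'h,'u,'z) profile"
  assumes "valid_game G"
    and "USI G \<iota>0 \<iota> i"
    and "BNE G g"
  shows "\<exists>\<rho>. K_based G i \<rho> \<and>
           BNE G (g(i := kstrat \<iota>0 \<iota> i \<rho>)) \<and>
           (\<forall>j. payoff G (g(i := kstrat \<iota>0 \<iota> i \<rho>)) j = payoff G g j)"
proof -
  obtain F :: "(nat \<Rightarrow> ('h,'z) hist \<Rightarrow> 'u pmf) \<Rightarrow> nat \<Rightarrow> 'k \<Rightarrow> ('h,'z) hist pmf"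
     and \<Phi> :: "('i,'h,'u,'z) profile \<Rightarrow> nat \<Rightarrow> 'k \<Rightarrow> ('x \<times> ('i \<Rightarrow> ('h,'z) hist)) pmf"
    where FP: "\<And>g. behavioral G g \<Longrightarrow>
        (\<forall>t k. t < horizon G \<longrightarrow> prob_K G g \<iota>0 \<iota> i t k > 0 \<longrightarrow>
          (\<forall>x H. cond_XH G g \<iota>0 \<iota> i t k x H =
             pmf (F (g i) t k) (H i) *
             measure_pmf.prob (\<Phi> (g(i := undefined)) t k)
               {(x', H'). x' = x \<and> (\<forall>j. j \<noteq> i \<longrightarrow> H' j = H j)}))"
    using assms(2) unfolding USI_def by blast
  have behg: "behavioral G g" using assms(3) unfolding BNE_def by blast
  have bne: "\<And>j g'. behavioral G (g(j := g')) \<Longrightarrow> payoff G (g(j := g')) j \<le> payoff G g j"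
    using assms(3) unfolding BNE_def by blast
  define \<rho> where "\<rho> = (\<lambda>t k. bind_pmf (F (g i) t k) (g i t))"
  have rep: "payoff G (g0(i := kstrat \<iota>0 \<iota> i \<rho>)) j = payoff G g0 j"
    if b0: "behavioral G g0" and gi: "g0 i = g i" for g0 j
  proof (rule replace_payoff[where F="F (g i)" and \<Phi>="\<Phi> (g0(i := undefined))"])
    show "\<And>t k x H. t < horizon G \<Longrightarrow> prob_K G g0 \<iota>0 \<iota> i t k > 0 \<Longrightarrow>
     cond_XH G g0 \<iota>0 \<iota> i t k x H = pmf (F (g i) t k) (H i) *
       measure_pmf.prob (\<Phi> (g0(i := undefined)) t k) {(x', H'). x' = x \<and> (\<forall>j. j \<noteq> i \<longrightarrow> H' j = H j)}"
      using FP[OF b0] gi by simp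
    show "\<And>t k. \<rho> t k = bind_pmf (F (g i) t k) (g0 i t)" by (simp add: \<rho>_def gi)
  qed
  have Kb: "K_based G i \<rho>"
    using behg unfolding K_based_def behavioral_def \<rho>_def by fastforce
  have beh1: "behavioral G (g(i := kstrat \<iota>0 \<iota> i \<rho>))"
    using behg Kb unfolding behavioral_def K_based_def kstrat_def by auto
  have pay: "\<forall>j. payoff G (g(i := kstrat \<iota>0 \<iota> i \<rho>)) j = payoff G g j"
    using rep[OF behg refl] by blast
  have "BNE G (g(i := kstrat \<iota>0 \<iota> i \<rho>))"
    unfolding BNE_def
  proof (intro conjI allI impI beh1)
    fix j g'
    assume bj: "behavioral G ((g(i := kstrat \<iota>0 \<iota> i \<rho>))(j := g'))"
    show "payoff G ((g(i := kstrat \<iota>0 \<iota> i \<rho>))(j := g')) j \<le> payoff G (g(i := kstrat \<iota>0 \<iota> i \<rho>)) j"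
    proof (cases "j = i")
      case True
      then have "(g(i := kstrat \<iota>0 \<iota> i \<rho>))(j := g') = g(j := g')" by simp
      then show ?thesis using bne[of j g'] bj pay by simp
    next
      case False
      have b0: "behavioral G (g(j := g'))"
        using bj behg False unfolding behavioral_def by (auto split: if_splits)
      have e: "(g(i := kstrat \<iota>0 \<iota> i \<rho>))(j := g') = (g(j := g'))(i := kstrat \<iota>0 \<iota> i \<rho>)"
        using False by (simp add: fun_upd_twist)
      show ?thesis unfolding e using rep[OF b0, of j] False bne[OF b0] pay by simp
    qed
  qed
  then show ?thesis using Kb pay by blast
qed

end
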